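(* For all integers $u\ge5$, $$9\,T_{24}^{(3\cdot 2^u)}\equiv T_0+2^{u-3}T_1\pmod{2^u},$$ where $T_0=\mathrm{Toepl}\big((0,0,0,0,0,0,0,0,1,0,0,0,0,0,0,0,2,0,0,0,0,0,0,0),\,(0,0,0,0,0,0,0,-1,0,0,0,0,0,0,0,-2,0,0,0,0,0,0,0)\big)$ and $T_1=\mathrm{Toepl}\big((3,0,0,0,4,0,0,0,3,0,4,0,6,0,4,0,4,0,4,0,6,0,4,0),\,(0,0,0,4,0,0,0,2,0,4,0,2,0,4,0,1,0,4,0,2,0,4,0)\big)$.
   Context: For integers $k,i\ge0$, $T_k^{(i)}$ is the $k\times k$ integer matrix $\big(\sum_{\alpha\in\mathbb{Z}}\alpha\binom{i}{\alpha k+r-s}\big)_{1\le r,s\le k}$, with $\binom{a}{b}=0$ if $b<0$ or $b>a$. For a $k$-tuple $S_1=(u_0,u_1,\dots,u_{k-1})$ and a $(k-1)$-tuple $S_2=(u_{-1},u_{-2},\dots,u_{-(k-1)})$, $\mathrm{Toepl}(S_1,S_2)$ is the $k\times k$ matrix whose $(r,s)$ entry is $u_{r-s}$. Congruence of matrices is entrywise. *)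

theory Defs
  imports "HOL-Number_Theory.Cong"
begin

definition binz :: "nat \<Rightarrow> int \<Rightarrow> int" where
  "binz a b = (if 0 \<le> b \<and> b \<le> int a then int (a choose nat b) else 0)"

text \<open>Entry (r,s), 1 \<le> r,s \<le> k, of T_k^(i): the sum over all integers alpha of
  alpha * binom(i, alpha*k + r - s); only alphas in the (finite, for k>0) support
  set contribute, all other terms are zero.\<close>
definition Tmat :: "nat \<Rightarrow> nat \<Rightarrow> nat \<Rightarrow> nat \<Rightarrow> int" where
  "Tmat k i r s = (\<Sum>\<alpha> \<in> {\<alpha>::int. 0 \<le> \<alpha> * int k + int r - int s \<and> \<alpha> * int k + int r - int s \<le> int i}.
       \<alpha> * binz i (\<alpha> * int k + int r - int s))"

text \<open>Toeplitz matrix: S1 = [u_0,...,u_{k-1}], S2 = [u_{-1},...,u_{-(k-1)}];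
  entry (r,s) is u_{r-s}.\<close>
definition toepl :: "int list \<Rightarrow> int list \<Rightarrow> nat \<Rightarrow> nat \<Rightarrow> int" where
  "toepl S1 S2 r s = (if s \<le> r then S1 ! (r - s) else S2 ! (s - r - 1))"

definition T0 :: "nat \<Rightarrow> nat \<Rightarrow> int" where
  "T0 = toepl [0,0,0,0,0,0,0,0,1,0,0,0,0,0,0,0,2,0,0,0,0,0,0,0]
              [0,0,0,0,0,0,0,-1,0,0,0,0,0,0,0,-2,0,0,0,0,0,0,0]"

definition T1 :: "nat \<Rightarrow> nat \<Rightarrow> int" where
  "T1 = toepl [3,0,0,0,4,0,0,0,3,0,4,0,6,0,4,0,4,0,4,0,6,0,4,0]
              [0,0,0,4,0,0,0,2,0,4,0,2,0,4,0,1,0,4,0,2,0,4,0]"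

end

theory Submission
  imports Defs "HOL-Computational_Algebra.Polynomial"
begin

definition mkp :: "int list \<Rightarrow> int poly" where "mkp xs = foldr pCons xs 0"

lemma mkp_Poly: "mkp xs = Poly xs"
  by (induction xs) (simp_all add: mkp_def)

definition A0 :: "int poly" where "A0 = mkp [6,0,0,0,0,0,0,0,-4,0,0,0,0,0,0,0,-5,0,0,0,0,0,0,0,0,0,0,0,0,0,0,0,1,0,0,0,0,0,0,0,2]"
definition A1 :: "int poly" where "A1 = mkp [1,0,4,0,-6,0,4,0,-5,0,-4,0,-10,0,-4,0,-6,0,-8,0,-8,0,-8,0,3,0,0,0,4,0,0,0,3,0,4,0,6,0,4,0,4,0,4,0,6,0,4]"
definition Q0 :: "int poly" where "Q0 = mkp [-18,0,0,0,0,0,0,0,-12,0,0,0,0,0,0,0,1,0,0,0,0,0,0,0,4,0,0,0,0,0,0,0,4]"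
definition Q1 :: "int poly" where "Q1 = mkp [-27,0,-28,0,-46,0,-28,0,-13,0,-20,0,-18,0,-20,0,9,0,4,0,14,0,4,0,10,0,12,0,18,0,12,0,8,0,8,0,12,0,8]"
definition P1 :: "int poly" where "P1 = mkp [3,0,2,0,8,0,2,0,3,0,2,0,9,0,2,0,3,0,2,0,10,0,2,0,-3,0,-2,0,-5,0,-2,0,-3,0,-2,0,-6,0,-2,0,-3,0,-2,0,-7,0,-2]"
definition Q2 :: "int poly" where "Q2 = mkp [-43,0,-88,0,-68,0,-152,0,-118,0,-120,0,-44,0,-56,0,-7,0,16,0,88,0,128,0,140,0,136,0,132,0,152,0,152,0,128,0,96,0,80,0,68,0,48,0,16]"
definition P2 :: "int poly" where "P2 = mkp [11,0,24,0,18,0,28,0,44,0,6,0,17,0,-6,0,19,0,-18,0,-3,0,-10,0,-15,0,-12,0,-20,0,-12,0,-34,0,-2,0,-13,0,2,0,-9,0,2,0,1,0,-2]"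
definition PG0 :: "int poly" where "PG0 = mkp []"
definition QG0 :: "int poly" where "QG0 = mkp []"
definition PG1 :: "int poly" where "PG1 = mkp [0,0,2,6,15,24,28,24,15,6,2]"
definition QG1 :: "int poly" where "QG1 = mkp []"
definition PG2 :: "int poly" where "PG2 = mkp [0,0,4,3,22,16,46,51,71,87,109,96,132,96,109,87,71,51,46,16,22,3,4]"
definition QG2 :: "int poly" where "QG2 = mkp []"
definition PG3 :: "int poly" where "PG3 = mkp [0,1,19,30,24,13,16,18,46,56,57,45,58,82,98,79,87,95,118,119,109,93,105,133,180,133,105,93,109,119,118,95,87,79,98,82,58,45,57,56,46,18,16,13,24,30,19,1]"
definition QG3 :: "int poly" where "QG3 = mkp [1]"
definition PG4 :: "int poly" where "PG4 = mkp [-490,-381,-414,-389,-410,-377,-333,-305,-337,-299,-250,-227,-216,-199,-177,-143,-91,-124,-88,-60,-47,-28,-20,-28,978,790,847,806,866,814,753,734,764,741,675,653,645,625,602,585,518,553,508,497,503,445,453,437]"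
definition QG4 :: "int poly" where "QG4 = mkp [15654,12192,13488,12704,13688,12960,11728,11424,12584,11296,10256,9760,9464,8992,8560,7456,6393,7328,5456,5536,4872,4128,3632,3872,2828,2976,2992,3232,3368,3616,2640,3360,3492,2880,2912,2624,2576,2496,2272,1728,1808,1664,1088,896,576,256,256]"
definition G0 :: "int poly" where "G0 = mkp [1,3,3,1]"
definition G1 :: "int poly" where "G1 = mkp [1,6,15,20,15,6,1]"
definition G2 :: "int poly" where "G2 = mkp [1,12,2,28,15,24,28,24,15,28,2,12,1]"
definition G3 :: "int poly" where "G3 = mkp [1,24,20,8,2,8,4,24,15,16,8,16,28,16,8,16,15,24,4,8,2,8,20,24,1]"
definition G4 :: "int poly" where "G4 = mkp [0,16,8,16,20,16,24,16,2,16,24,16,4,16,8,16,15,0,16,0,8,0,16,0,30,0,16,0,8,0,16,0,15,16,8,16,4,16,24,16,2,16,24,16,20,16,8,16]"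
definition G5 :: "int poly" where "G5 = mkp [26,0,16,0,8,0,16,0,8,0,16,0,24,0,16,0,11,0,0,0,0,0,0,0,12,0,0,0,16,0,0,0,5,0,16,0,24,0,16,0,2,0,16,0,24,0,16]"
definition PB :: "int poly" where "PB = mkp [7,0,4,0,3,0,4,0,3,0,5,0,8,0,5,0,4,0,1,0,1,0,1,0,3,0,0,0,4,0,0,0,1,0,4,0,6,0,4,0,0,0,4,0,6,0,4]"
definition QB :: "int poly" where "QB = mkp []"

definition XX :: "int poly" where "XX = monom 1 24"
definition DD :: "int poly" where "DD = (XX - 1)^2"

lemma DD_code: "DD = mkp [1,0,0,0,0,0,0,0,0,0,0,0,0,0,0,0,0,0,0,0,0,0,0,0,-2,0,0,0,0,0,0,0,0,0,0,0,0,0,0,0,0,0,0,0,0,0,0,0,1]"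
  unfolding DD_def XX_def mkp_def by code_simp

lemma F0: "A0*A0 - 9*A0 = DD * Q0" unfolding DD_code mkp_def A0_def Q0_def by code_simp
lemma F1: "A0*A1 - 9*A1 = 8*P1 + DD * Q1" unfolding DD_code mkp_def A0_def A1_def P1_def Q1_def by code_simp
lemma F2: "A1*A1 = 4*P2 + DD * Q2" unfolding DD_code mkp_def A1_def P2_def Q2_def by code_simp
lemma FG0: "G0^2 - G1 = 32*PG0 + DD * QG0" unfolding DD_code mkp_def G0_def G1_def PG0_def QG0_def by code_simp
lemma FG1: "G1^2 - G2 = 32*PG1 + DD * QG1" unfolding DD_code mkp_def G1_def G2_def PG1_def QG1_def by code_simp
lemma FG2: "G2^2 - G3 = 32*PG2 + DD * QG2" unfolding DD_code mkp_def G2_def G3_def PG2_def QG2_def by code_simp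
lemma FG3: "G3^2 - G4 = 32*PG3 + DD * QG3" unfolding DD_code mkp_def G3_def G4_def PG3_def QG3_def by code_simp
lemma FG4: "G4^2 - G5 = 32*PG4 + DD * QG4" unfolding DD_code mkp_def G4_def G5_def PG4_def QG4_def by code_simp
lemma FB: "9*G5 - (A0 + 4*A1) = 32*PB + DD * QB" unfolding DD_code mkp_def G5_def A0_def A1_def PB_def QB_def by code_simp
lemma FG: "G0 = [:1,1:]^3" unfolding mkp_def G0_def by code_simp



definition cg :: "int \<Rightarrow> int poly \<Rightarrow> int poly \<Rightarrow> bool" where
  "cg m p q \<longleftrightarrow> (\<exists>P Q. p - q = of_int m * P + DD * Q)"

lemma cgI: "p - q = of_int m * P + DD * Q \<Longrightarrow> cg m p q"
  unfolding cg_def by blast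

lemma cg_refl: "cg m p p"
  by (rule cgI[of _ _ _ 0 0]) simp

lemma cg_trans:
  assumes "cg m p q" "cg m q r" shows "cg m p r"
proof -
  obtain P Q P' Q' where e1: "p - q = of_int m * P + DD * Q"
    and e2: "q - r = of_int m * P' + DD * Q'" using assms unfolding cg_def by blast
  have "p - r = (p - q) + (q - r)" by simp
  also have "\<dots> = of_int m * (P + P') + DD * (Q + Q')" using e1 e2 by (simp add: algebra_simps)
  finally show ?thesis by (rule cgI)
qed

lemma cg_mult:
  assumes "cg m p q" "cg m p' q'" shows "cg m (p * p') (q * q')"
proof -
  obtain P Q P' Q' where e1: "p - q = of_int m * P + DD * Q"
    and e2: "p' - q' = of_int m * P' + DD * Q'" using assms unfolding cg_def by blast
  have "p * p' - q * q' = (p - q) * p' + q * (p' - q')" by (simp add: algebra_simps)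
  also have "\<dots> = of_int m * (P * p' + q * P') + DD * (Q * p' + q * Q')"
    using e1 e2 by (simp add: algebra_simps)
  finally show ?thesis by (rule cgI)
qed

lemma cg_sq: "cg m p q \<Longrightarrow> cg m (p^2) (q^2)"
  unfolding power2_eq_square by (rule cg_mult)

lemma cg_lift:
  assumes "cg (2^u) p q" "1 \<le> u" shows "cg (2^Suc u) (p^2) (q^2)"
proof -
  obtain P Q where e1: "p - q = of_int (2^u) * P + DD * Q" using assms unfolding cg_def by blast
  define E :: "int poly" where "E = of_int (2^(u-1))"
  have u: "u = Suc (u - 1)" using assms(2) by simp
  have M1: "(of_int (2^u) :: int poly) = 2 * E" unfolding E_def by (subst u) simp
  have M2: "(of_int (2^Suc u) :: int poly) = 4 * E" unfolding E_def by (subst u) simp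
  have p: "p = q + 2 * E * P + DD * Q" using e1 M1 by (simp add: algebra_simps)
  have "p^2 - q^2 = 4 * E * (E * P * P + P * q) + DD * (Q * (p + q) + 2 * E * P * Q)"
    unfolding p by (simp add: algebra_simps power2_eq_square)
  then show ?thesis unfolding M2[symmetric] by (rule cgI)
qed

lemma cg_cancel9:
  assumes "cg (2^n) (9 * p) (9 * q)" shows "cg (2^n) p q"
proof -
  obtain P Q where e1: "9 * p - 9 * q = of_int (2^n) * P + DD * Q" using assms unfolding cg_def by blast
  have "coprime (9::int) (2^n)" by simp
  then obtain k :: int where "[9 * k = 1] (mod 2^n)" using cong_solve_coprime_int by blast
  then obtain j :: int where kj: "1 = 9 * k + 2^n * j" unfolding cong_iff_lin by blast
  have kj': "(1 :: int poly) = 9 * of_int k + of_int (2^n) * of_int j"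
    by (metis kj of_int_1 of_int_add of_int_mult of_int_numeral)
  have "p - q = (9 * of_int k + of_int (2^n) * of_int j) * (p - q)"
    by (metis kj' mult_1)
  also have "\<dots> = of_int k * (9 * p - 9 * q) + of_int (2^n) * of_int j * (p - q)"
    by (simp add: algebra_simps)
  also have "\<dots> = of_int (2^n) * (of_int k * P + of_int j * (p - q)) + DD * (of_int k * Q)"
    unfolding e1 by (simp add: algebra_simps)
  finally show ?thesis by (rule cgI)
qed

definition EE :: "nat \<Rightarrow> int poly" where "EE u = [:1,1:]^(3*2^u)"
definition RR :: "nat \<Rightarrow> int poly" where "RR u = A0 + of_int (2^(u-3)) * A1"

lemma EE_Suc: "EE (Suc u) = (EE u)^2"
  unfolding EE_def by (simp add: power_mult[symmetric] mult.assoc)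

lemma RR_sq:
  assumes "5 \<le> u" shows "cg (2^Suc u) ((RR u)^2) (9 * RR (Suc u))"
proof -
  define E :: "int poly" where "E = of_int (2^(u-5))"
  have u: "u = (u - 5) + 5" using assms by simp
  have M1: "(of_int (2^(u-3)) :: int poly) = 4 * E" unfolding E_def by (subst u) (simp add: power_add)
  have M2: "(of_int (2^(Suc u - 3)) :: int poly) = 8 * E" unfolding E_def by (subst u) (simp add: power_add)
  have M3: "(of_int (2^Suc u) :: int poly) = 64 * E" unfolding E_def by (subst u) (simp add: power_add)
  have "(RR u)^2 - 9 * RR (Suc u) = (A0*A0 - 9*A0) + 8 * E * (A0*A1 - 9*A1) + 16 * E * E * (A1 * A1)"
    unfolding RR_def M1 M2 by (simp add: algebra_simps power2_eq_square)
  also have "\<dots> = 64 * E * (P1 + E * P2) + DD * (Q0 + 8 * E * Q1 + 16 * E * E * Q2)"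
    unfolding F0 F1 F2 by (simp add: algebra_simps)
  finally show ?thesis unfolding M3[symmetric] by (rule cgI)
qed

lemma step_lemma:
  assumes "5 \<le> u" "cg (2^u) (9 * EE u) (RR u)"
  shows "cg (2^Suc u) (9 * EE (Suc u)) (RR (Suc u))"
proof -
  have A: "cg (2^Suc u) ((9 * EE u)^2) ((RR u)^2)" by (rule cg_lift[OF assms(2)]) (use assms(1) in simp)
  have B: "(9 * EE u)^2 = 9 * (9 * EE (Suc u))" unfolding EE_Suc by (simp add: algebra_simps power2_eq_square)
  from A have "cg (2^Suc u) (9 * (9 * EE (Suc u))) ((RR u)^2)" unfolding B .
  then have "cg (2^Suc u) (9 * (9 * EE (Suc u))) (9 * RR (Suc u))"
    by (rule cg_trans[OF _ RR_sq[OF assms(1)]])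
  then show ?thesis by (rule cg_cancel9)
qed

lemma base5: "cg (2^5) (9 * EE 5) (RR 5)"
proof -
  have g: "a^2 - b = 32 * c + DD * e \<Longrightarrow> cg 32 (a^2) b" for a b c e
    by (rule cgI[where P=c and Q=e]) simp
  have c1: "cg 32 (G0^2) G1" using FG0 by (rule g)
  have c2: "cg 32 ((G0^2)^2) G2" using cg_trans[OF cg_sq[OF c1] g[OF FG1]] .
  have c3: "cg 32 (((G0^2)^2)^2) G3" using cg_trans[OF cg_sq[OF c2] g[OF FG2]] .
  have c4: "cg 32 ((((G0^2)^2)^2)^2) G4" using cg_trans[OF cg_sq[OF c3] g[OF FG3]] .
  have c5: "cg 32 (((((G0^2)^2)^2)^2)^2) G5" using cg_trans[OF cg_sq[OF c4] g[OF FG4]] .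
  have n: "(3*2^5::nat) = 3*2*2*2*2*2" by simp
  have e: "EE 5 = ((((G0^2)^2)^2)^2)^2" unfolding EE_def FG n by (simp only: power_mult)
  have "cg 32 (9 * EE 5) (9 * G5)" unfolding e by (rule cg_mult[OF cg_refl c5])
  moreover have "cg 32 (9 * G5) (RR 5)"
  proof (rule cgI[where P=PB and Q=QB])
    show "9 * G5 - RR 5 = of_int 32 * PB + DD * QB" using FB by (simp add: RR_def)
  qed
  ultimately have "cg 32 (9 * EE 5) (RR 5)" by (rule cg_trans)
  then show ?thesis by simp
qed

lemma main: "5 \<le> u \<Longrightarrow> cg (2^u) (9 * EE u) (RR u)"
proof (induction u rule: dec_induct)
  case base then show ?case by (rule base5)
next
  case (step n) show ?case by (rule step_lemma[OF step(1) step(3)])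
qed



definition ww :: "int \<Rightarrow> nat \<Rightarrow> int" where
  "ww d m = (if (int m - d) mod 24 = 0 then (int m - d) div 24 else 0)"
definition ii :: "int \<Rightarrow> nat \<Rightarrow> int" where
  "ii d m = (if (int m - d) mod 24 = 0 then 1 else 0)"
definition LN :: "nat \<Rightarrow> int \<Rightarrow> int poly \<Rightarrow> int" where
  "LN N d p = (\<Sum>m<N. ww d m * coeff p m)"
definition SN :: "nat \<Rightarrow> int \<Rightarrow> int poly \<Rightarrow> int" where
  "SN N d p = (\<Sum>m<N. ii d m * coeff p m)"

lemma LN_add: "LN N d (p + q) = LN N d p + LN N d q"
  unfolding LN_def by (simp add: algebra_simps sum.distrib)
lemma LN_diff: "LN N d (p - q) = LN N d p - LN N d q"
  unfolding LN_def by (simp add: algebra_simps sum_subtractf)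
lemma LN_ofint: "LN N d (of_int c * p) = c * LN N d p"
  unfolding LN_def by (simp add: of_int_poly sum_distrib_left algebra_simps)

lemma sum_shift:
  fixes f :: "nat \<Rightarrow> 'a::comm_monoid_add" and N k :: nat
  shows "(\<Sum>m<N+k. f m) = (\<Sum>m<k. f m) + (\<Sum>j<N. f (j+k))"
  by (induction N) (simp_all add: add_ac)

lemma ww_shift: "ww d (j + 24) = ww d j + ii d j"
proof -
  have e: "int (j + 24) - d = (int j - d) + 24" by simp
  define x where "x = int j - d"
  have h: "(x + 24) mod 24 = x mod 24" "(x + 24) div 24 = x div 24 + 1" by simp_all
  show ?thesis unfolding ww_def ii_def e x_def[symmetric] using h by simp
qed

lemma ii_shift: "ii d (j + 24) = ii d j"
proof -
  have e: "int (j + 24) - d = (int j - d) + 24" by simp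
  define x where "x = int j - d"
  have h: "(x + 24) mod 24 = x mod 24" by simp
  show ?thesis unfolding ii_def e x_def[symmetric] using h by simp
qed

lemma coeff_XX: "coeff (XX * Q) (j + 24) = coeff Q j" "m < 24 \<Longrightarrow> coeff (XX * Q) m = 0"
  unfolding XX_def by (simp_all add: coeff_monom_mult)

lemma LN_shift: "LN (N+24) d (XX * Q) = LN N d Q + SN N d Q"
proof -
  have z: "(\<Sum>m<24. ww d m * coeff (XX * Q) m) = 0" by (simp add: coeff_XX(2))
  have "LN (N+24) d (XX * Q) = (\<Sum>j<N. (ww d j + ii d j) * coeff Q j)"
    unfolding LN_def sum_shift z coeff_XX(1) ww_shift by simp
  also have "\<dots> = LN N d Q + SN N d Q"
    unfolding LN_def SN_def distrib_right sum.distrib ..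
  finally show ?thesis .
qed

lemma SN_shift: "SN (N+24) d (XX * Q) = SN N d Q"
proof -
  have z: "(\<Sum>m<24. ii d m * coeff (XX * Q) m) = 0" by (simp add: coeff_XX(2))
  show ?thesis unfolding SN_def sum_shift z coeff_XX(1) ii_shift by simp
qed

lemma LN_ext: "degree Q < N \<Longrightarrow> LN (N+k) d Q = LN N d Q"
  unfolding LN_def by (subst add.commute) (simp add: sum_shift[of _ k N] coeff_eq_0)

lemma SN_ext: "degree Q < N \<Longrightarrow> SN (N+k) d Q = SN N d Q"
  unfolding SN_def by (subst add.commute) (simp add: sum_shift[of _ k N] coeff_eq_0)

lemma LN_DD:
  assumes "degree Q < N" shows "LN (N+48) d (DD * Q) = 0"
proof -
  have n: "N + 48 = (N + 24) + 24" by simp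
  have dd: "DD * Q = XX * (XX * Q) - XX * Q - XX * Q + Q"
    unfolding DD_def by (simp add: algebra_simps power2_eq_square)
  have deg: "degree Q < N + 24" using assms by simp
  have h1: "LN (N+48) d (XX * (XX * Q)) = LN N d Q + 2 * SN N d Q"
    unfolding n LN_shift SN_shift by simp
  have h2: "LN (N+48) d (XX * Q) = LN N d Q + SN N d Q"
    unfolding n LN_shift LN_ext[OF deg] SN_ext[OF deg] by (simp add: LN_ext[OF assms] SN_ext[OF assms])
  have h3: "LN (N+48) d Q = LN N d Q" by (rule LN_ext[OF assms])
  show ?thesis unfolding dd LN_add LN_diff h1 h2 h3 by simp
qed



lemma coeff_lin: "coeff ([:1,1:]^i) m = (if m \<le> i then int (i choose m) else 0)"
proof (cases "m \<le> i")
  case True then show ?thesis by (simp add: coeff_linear_poly_power)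
next
  case False
  have "degree ([:1::int,1:]^i) \<le> i"
    using degree_power_le[of "[:1::int,1:]" i] by simp
  then show ?thesis using False by (simp add: coeff_eq_0)
qed

lemma Tmat_LN:
  assumes "i < N"
  shows "Tmat 24 i r s = LN N (int r - int s) ([:1,1:]^i)"
proof -
  define d where "d = int r - int s"
  define S where "S = {\<alpha>::int. 0 \<le> \<alpha> * 24 + d \<and> \<alpha> * 24 + d \<le> int i}"
  define T where "T = {m::nat. m \<le> i \<and> (int m - d) mod 24 = 0}"
  have "Tmat 24 i r s = (\<Sum>\<alpha>\<in>S. \<alpha> * binz i (\<alpha> * 24 + d))"
  proof -
    have X: "\<alpha> * int 24 + int r - int s = \<alpha> * 24 + d" for \<alpha> :: int unfolding d_def by simp
    show ?thesis unfolding Tmat_def S_def X ..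
  qed
  also have "\<dots> = (\<Sum>m\<in>T. ww d m * int (i choose m))"
  proof (rule sum.reindex_bij_witness[where i = "\<lambda>m. (int m - d) div 24" and j = "\<lambda>\<alpha>. nat (\<alpha> * 24 + d)"])
    fix a assume "a \<in> S"
    then show "(int (nat (a * 24 + d)) - d) div 24 = a" unfolding S_def by simp
    show "nat (a * 24 + d) \<in> T" using \<open>a \<in> S\<close> unfolding S_def T_def by auto
    show "ww d (nat (a * 24 + d)) * int (i choose nat (a * 24 + d)) = a * binz i (a * 24 + d)"
      using \<open>a \<in> S\<close> unfolding S_def ww_def binz_def by simp
  next
    fix b assume b: "b \<in> T"
    then have "(int b - d) mod 24 = 0" unfolding T_def by simp
    then have e: "(int b - d) div 24 * 24 = int b - d" by (metis div_mult_mod_eq add_0_right)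
    show "nat ((int b - d) div 24 * 24 + d) = b" using e by simp
    show "(int b - d) div 24 \<in> S" using e b unfolding S_def T_def by simp
  qed
  also have "\<dots> = (\<Sum>m<N. ww d m * coeff ([:1,1:]^i) m)"
  proof (rule sum.mono_neutral_cong_left)
    show "finite {..<N}" by simp
    show "T \<subseteq> {..<N}" using assms unfolding T_def by auto
    show "\<forall>m\<in>{..<N} - T. ww d m * coeff ([:1,1:]^i) m = 0"
      unfolding T_def ww_def coeff_lin by auto
    show "\<And>m. m \<in> T \<Longrightarrow> ww d m * int (i choose m) = ww d m * coeff ([:1,1:]^i) m"
      unfolding T_def coeff_lin by auto
  qed
  finally show ?thesis unfolding LN_def d_def .
qed

lemma toepl_shift: "toepl S1 S2 r s = toepl S1 S2 (nat (int r - int s) + 1) (nat (int s - int r) + 1)"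
proof (cases "s \<le> r")
  case True
  then have "nat (int r - int s) = r - s" "nat (int s - int r) = 0" by simp_all
  then show ?thesis using True unfolding toepl_def by simp
next
  case False
  then have "nat (int r - int s) = 0" "nat (int s - int r) = s - r" by simp_all
  then show ?thesis using False unfolding toepl_def by simp
qed

lemma conc2: "\<forall>d\<in>{-23..23}. LN 48 d A0 = T0 (nat d + 1) (nat (-d) + 1) \<and> LN 48 d A1 = T1 (nat d + 1) (nat (-d) + 1)"
  unfolding LN_def ww_def A0_def A1_def mkp_def T0_def T1_def toepl_def by code_simp

lemma degA: "degree A0 < 48" "degree A1 < 48"
  unfolding A0_def A1_def mkp_def by code_simp+

theorem theorem9:
  fixes u :: nat
  assumes "u \<ge> 5"
  shows "\<forall>r \<in> {1..24}. \<forall>s \<in> {1..24}.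
           [9 * Tmat 24 (3 * 2 ^ u) r s = T0 r s + 2 ^ (u - 3) * T1 r s] (mod 2 ^ u)"
proof (intro ballI)
  fix r s :: nat assume rs: "r \<in> {1..24}" "s \<in> {1..24}"
  define d where "d = int r - int s"
  obtain P Q where e: "9 * EE u - RR u = of_int (2^u) * P + DD * Q"
    using main[OF assms] unfolding cg_def by blast
  define N0 where "N0 = 3 * 2^u + degree Q + 48"
  define N where "N = N0 + 48"
  have "LN N d (9 * EE u - RR u) = LN N d (of_int (2^u) * P + DD * Q)" by (simp only: e)
  then have h: "9 * LN N d (EE u) - LN N d (RR u) = 2^u * LN N d P + LN N d (DD * Q)"
    unfolding LN_diff LN_add LN_ofint[symmetric] by simp
  have z: "LN N d (DD * Q) = 0" unfolding N_def by (rule LN_DD) (simp add: N0_def)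
  have t: "LN N d (EE u) = Tmat 24 (3 * 2 ^ u) r s"
    unfolding EE_def d_def by (rule Tmat_LN[symmetric]) (simp add: N_def N0_def)
  have N48: "N = 48 + (N - 48)" unfolding N_def by simp
  have r: "LN N d (RR u) = LN 48 d A0 + 2^(u-3) * LN 48 d A1"
  proof -
    have a0: "LN N d A0 = LN 48 d A0" using LN_ext[OF degA(1), of "N - 48" d] by (simp add: N_def add.commute)
    have a1: "LN N d A1 = LN 48 d A1" using LN_ext[OF degA(2), of "N - 48" d] by (simp add: N_def add.commute)
    show ?thesis unfolding RR_def LN_add LN_ofint a0 a1 ..
  qed
  have dr: "d \<in> {-23..23}" using rs unfolding d_def by auto
  have sh0: "T0 r s = T0 (nat d + 1) (nat (-d) + 1)" unfolding T0_def d_def using toepl_shift[of _ _ r s] by simp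
  have sh1: "T1 r s = T1 (nat d + 1) (nat (-d) + 1)" unfolding T1_def d_def using toepl_shift[of _ _ r s] by simp
  have c: "LN 48 d A0 = T0 r s \<and> LN 48 d A1 = T1 r s" unfolding sh0 sh1 using conc2 dr by blast
  have "9 * Tmat 24 (3 * 2 ^ u) r s - (T0 r s + 2 ^ (u - 3) * T1 r s) = 2^u * LN N d P"
    using h unfolding z t r c[THEN conjunct1] c[THEN conjunct2] by (simp only: add_0_right)
  then show "[9 * Tmat 24 (3 * 2 ^ u) r s = T0 r s + 2 ^ (u - 3) * T1 r s] (mod 2 ^ u)"
    unfolding cong_iff_dvd_diff by (simp only: dvd_triv_left)
qed

end
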